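(* Let $\iota:R\to S$ be a ring morphism such that $S$ is locally projective as a left $R$-module, and let $\mathcal C=S\otimes_RS$ be the Sweedler $S$-coring, with $\Delta(s\otimes_R s')=(s\otimes_R1)\otimes_S(1\otimes_Rs')$ and $\varepsilon(s\otimes_Rs')=ss'$. Then $\mathrm{Rat}^{\mathcal C}({}^*\mathcal C)$ is dense in ${}^*\mathcal C$ in the finite topology, and hence the functor $\mathrm{Rat}^{\mathcal C}$ from right ${}^*\mathcal C$-modules to right $\mathcal C$-comodules is exact.
   Context: For a ring $A$ and an $A$-coring $\mathcal C$ (an $A$-bimodule with coassociative counital bimodule maps $\Delta:\mathcal C\to\mathcal C\otimes_A\mathcal C$, $\varepsilon:\mathcal C\to A$, $\Delta(c)=c_{(1)}\otimes c_{(2)}$), ${}^*\mathcal C={}_A\mathrm{Hom}(\mathcal C,A)$ is a ring with product $(f\#g)(c)=g(c_{(1)}f(c_{(2)}))$. Here $A=S$, and ${}^*\mathcal C\cong{}_R\mathrm{End}(S)$ with multiplication the opposite composition (via $\varphi\mapsto(s\mapsto\varphi(1\otimes_Rs))$). Right $\mathcal C$-comodules (coactions $n\mapsto n_{[0]}\otimes n_{[1]}\in N\otimes_S\mathcal C$) are right ${}^*\mathcal C$-modules via $n\cdot f=n_{[0]}f(n_{[1]})$. For a right ${}^*\mathcal C$-module $M$, $\mathrm{Rat}^{\mathcal C}(M)$ is the set of $m\in M$ for which there is $\sum_i m_i\otimes c_i\in M\otimes_S\mathcal C$ with $m\cdot f=\sum_i m_if(c_i)$ for all $f\in{}^*\mathcal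 C$. The finite topology on ${}^*\mathcal C={}_S\mathrm{Hom}(\mathcal C,S)$ has basic open sets $\{g\mid g(c)=f(c)\ \forall c\in F\}$, $F\subseteq\mathcal C$ finite. *)

theory Defs
  imports "HOL-Algebra.Algebra"
begin

definition R_linear_endo ::
  "('r,'a) ring_scheme \<Rightarrow> ('s,'b) ring_scheme \<Rightarrow> ('r \<Rightarrow> 's) \<Rightarrow> ('s \<Rightarrow> 's) \<Rightarrow> bool" where
  "R_linear_endo R S \<iota> \<phi> \<longleftrightarrow>
     \<phi> \<in> carrier S \<rightarrow>\<^sub>E carrier S \<and>
     (\<forall>x\<in>carrier S. \<forall>y\<in>carrier S. \<phi> (x \<oplus>\<^bsub>S\<^esub> y) = \<phi> x \<oplus>\<^bsub>S\<^esub> \<phi> y) \<and>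
     (\<forall>r\<in>carrier R. \<forall>x\<in>carrier S. \<phi> (\<iota> r \<otimes>\<^bsub>S\<^esub> x) = \<iota> r \<otimes>\<^bsub>S\<^esub> \<phi> x)"

text \<open>The ring *C = {}_S Hom(S \<otimes>_R S, S), realised as {}_R End(S) with the
 opposite composition  (phi # psi) = psi o phi.  The element phi corresponds to the
 map s \<otimes> s' \<mapsto> s * phi s'.\<close>
definition Cstar :: "('r,'a) ring_scheme \<Rightarrow> ('s,'b) ring_scheme \<Rightarrow> ('r \<Rightarrow> 's) \<Rightarrow> ('s \<Rightarrow> 's) ring" where
  "Cstar R S \<iota> =
     \<lparr>carrier = {\<phi>. R_linear_endo R S \<iota> \<phi>},
      monoid.mult = (\<lambda>\<phi> \<psi>. restrict (\<psi> \<circ> \<phi>) (carrier S)),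
      monoid.one = restrict id (carrier S),
      ring.zero = restrict (\<lambda>_. \<zero>\<^bsub>S\<^esub>) (carrier S),
      ring.add = (\<lambda>\<phi> \<psi>. restrict (\<lambda>x. \<phi> x \<oplus>\<^bsub>S\<^esub> \<psi> x) (carrier S))\<rparr>"

text \<open>The ring map S \<rightarrow> *C, a \<mapsto> epsilon(-) a; in End-form: right multiplication by a.\<close>
definition rmult :: "('s,'b) ring_scheme \<Rightarrow> 's \<Rightarrow> ('s \<Rightarrow> 's)" where
  "rmult S a = restrict (\<lambda>x. x \<otimes>\<^bsub>S\<^esub> a) (carrier S)"

text \<open>Elements of the Sweedler coring C = S \<otimes>_R S are represented by lists of
 pairs [(t1,t1'),...,(tk,tk')] standing for the sum of the ti \<otimes> ti'.\<close>
definition sweedler_elem :: "('s,'b) ring_scheme \<Rightarrow> ('s \<times> 's) list \<Rightarrow> bool" where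
  "sweedler_elem S c \<longleftrightarrow> set c \<subseteq> carrier S \<times> carrier S"

definition coring_eval :: "('s,'b) ring_scheme \<Rightarrow> ('s \<Rightarrow> 's) \<Rightarrow> ('s \<times> 's) list \<Rightarrow> 's" where
  "coring_eval S \<phi> c = (\<Oplus>\<^bsub>S\<^esub> i\<in>{..<length c}. fst (c!i) \<otimes>\<^bsub>S\<^esub> \<phi> (snd (c!i)))"

definition right_Cstar_module ::
  "('r,'a) ring_scheme \<Rightarrow> ('s,'b) ring_scheme \<Rightarrow> ('r \<Rightarrow> 's) \<Rightarrow>
   ('m,'c) ring_scheme \<Rightarrow> ('m \<Rightarrow> ('s \<Rightarrow> 's) \<Rightarrow> 'm) \<Rightarrow> bool" where
  "right_Cstar_module R S \<iota> M act \<longleftrightarrow>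
     abelian_group M \<and>
     (\<forall>m\<in>carrier M. \<forall>\<phi>\<in>carrier (Cstar R S \<iota>). act m \<phi> \<in> carrier M) \<and>
     (\<forall>m\<in>carrier M. \<forall>n\<in>carrier M. \<forall>\<phi>\<in>carrier (Cstar R S \<iota>).
        act (m \<oplus>\<^bsub>M\<^esub> n) \<phi> = act m \<phi> \<oplus>\<^bsub>M\<^esub> act n \<phi>) \<and>
     (\<forall>m\<in>carrier M. \<forall>\<phi>\<in>carrier (Cstar R S \<iota>). \<forall>\<psi>\<in>carrier (Cstar R S \<iota>).
        act m (\<phi> \<oplus>\<^bsub>Cstar R S \<iota>\<^esub> \<psi>) = act m \<phi> \<oplus>\<^bsub>M\<^esub> act m \<psi>) \<and>
     (\<forall>m\<in>carrier M. \<forall>\<phi>\<in>carrier (Cstar R S \<iota>). \<forall>\<psi>\<in>carrier (Cstar R S \<iota>).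
        act m (\<phi> \<otimes>\<^bsub>Cstar R S \<iota>\<^esub> \<psi>) = act (act m \<phi>) \<psi>) \<and>
     (\<forall>m\<in>carrier M. act m \<one>\<^bsub>Cstar R S \<iota>\<^esub> = m)"

definition Cstar_mod_hom ::
  "('r,'a) ring_scheme \<Rightarrow> ('s,'b) ring_scheme \<Rightarrow> ('r \<Rightarrow> 's) \<Rightarrow>
   ('m,'c) ring_scheme \<Rightarrow> ('m \<Rightarrow> ('s \<Rightarrow> 's) \<Rightarrow> 'm) \<Rightarrow>
   ('n,'d) ring_scheme \<Rightarrow> ('n \<Rightarrow> ('s \<Rightarrow> 's) \<Rightarrow> 'n) \<Rightarrow> ('m \<Rightarrow> 'n) \<Rightarrow> bool" where
  "Cstar_mod_hom R S \<iota> M a N b f \<longleftrightarrow>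
     f \<in> carrier M \<rightarrow> carrier N \<and>
     (\<forall>x\<in>carrier M. \<forall>y\<in>carrier M. f (x \<oplus>\<^bsub>M\<^esub> y) = f x \<oplus>\<^bsub>N\<^esub> f y) \<and>
     (\<forall>x\<in>carrier M. \<forall>\<phi>\<in>carrier (Cstar R S \<iota>). f (a x \<phi>) = b (f x) \<phi>)"

text \<open>Rat^C(M): those m for which there is sum n_i \<otimes>_S c_i in M \<otimes>_S C
 (c_i = t_i \<otimes>_R t_i' elementary; general elements are sums of such) with
 m . f = sum n_i f(c_i) for all f in *C.  Here n . s is the S-action via rmult.\<close>
definition Rat ::
  "('r,'a) ring_scheme \<Rightarrow> ('s,'b) ring_scheme \<Rightarrow> ('r \<Rightarrow> 's) \<Rightarrow>
   ('m,'c) ring_scheme \<Rightarrow> ('m \<Rightarrow> ('s \<Rightarrow> 's) \<Rightarrow> 'm) \<Rightarrow> 'm set" where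
  "Rat R S \<iota> M act =
     {m \<in> carrier M. \<exists>xs :: ('m \<times> 's \<times> 's) list.
        (\<forall>(n,t,t')\<in>set xs. n \<in> carrier M \<and> t \<in> carrier S \<and> t' \<in> carrier S) \<and>
        (\<forall>\<phi>\<in>carrier (Cstar R S \<iota>).
           act m \<phi> = (\<Oplus>\<^bsub>M\<^esub> i\<in>{..<length xs}.
              act (fst (xs!i)) (rmult S (coring_eval S \<phi> [snd (xs!i)]))))}"

text \<open>S locally projective as a left R-module (Zimmermann-Huisgen), in its
 finite dual basis form: for every finite F \<subseteq> S there are e_i \<in> S and
 f_i \<in> {}_R Hom(S,R) with x = sum f_i(x) . e_i for all x \<in> F.\<close>
definition locally_projective_left ::
  "('r,'a) ring_scheme \<Rightarrow> ('s,'b) ring_scheme \<Rightarrow> ('r \<Rightarrow> 's) \<Rightarrow> bool" where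
  "locally_projective_left R S \<iota> \<longleftrightarrow>
     (\<forall>F. finite F \<and> F \<subseteq> carrier S \<longrightarrow>
       (\<exists>bs :: (('s \<Rightarrow> 'r) \<times> 's) list.
          (\<forall>(f,e)\<in>set bs. e \<in> carrier S \<and> f \<in> carrier S \<rightarrow> carrier R \<and>
             (\<forall>x\<in>carrier S. \<forall>y\<in>carrier S. f (x \<oplus>\<^bsub>S\<^esub> y) = f x \<oplus>\<^bsub>R\<^esub> f y) \<and>
             (\<forall>r\<in>carrier R. \<forall>x\<in>carrier S. f (\<iota> r \<otimes>\<^bsub>S\<^esub> x) = r \<otimes>\<^bsub>R\<^esub> f x)) \<and>
          (\<forall>x\<in>F. x = (\<Oplus>\<^bsub>S\<^esub> i\<in>{..<length bs}. \<iota> (fst (bs!i) x) \<otimes>\<^bsub>S\<^esub> snd (bs!i)))))"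

end

theory Submission imports Defs begin

lemma (in abelian_group) idem_zero: "a \<in> carrier G \<Longrightarrow> a \<oplus> a = a \<Longrightarrow> a = \<zero>"
  by (metis add.l_cancel_one)

lemma add_hom_zero:
  assumes "abelian_group M" "abelian_group N" "h \<in> carrier M \<rightarrow> carrier N"
    "\<forall>x\<in>carrier M. \<forall>y\<in>carrier M. h (x \<oplus>\<^bsub>M\<^esub> y) = h x \<oplus>\<^bsub>N\<^esub> h y"
  shows "h \<zero>\<^bsub>M\<^esub> = \<zero>\<^bsub>N\<^esub>"
proof -
  interpret M: abelian_group M by fact
  interpret N: abelian_group N by fact
  have "h \<zero>\<^bsub>M\<^esub> \<oplus>\<^bsub>N\<^esub> h \<zero>\<^bsub>M\<^esub> = h \<zero>\<^bsub>M\<^esub>"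
    using assms(4) by (metis M.zero_closed M.l_zero)
  then show ?thesis using assms(3) by (intro N.idem_zero) auto
qed

lemma add_hom_finsum:
  assumes "abelian_group M" "abelian_group N" "h \<in> carrier M \<rightarrow> carrier N"
    "\<forall>x\<in>carrier M. \<forall>y\<in>carrier M. h (x \<oplus>\<^bsub>M\<^esub> y) = h x \<oplus>\<^bsub>N\<^esub> h y"
    "finite A"
  shows "g \<in> A \<rightarrow> carrier M \<Longrightarrow> h (finsum M g A) = finsum N (\<lambda>i. h (g i)) A"
  using assms(5)
proof (induction A rule: finite_induct)
  case empty
  interpret M: abelian_group M by fact
  interpret N: abelian_group N by fact
  show ?case using add_hom_zero[OF assms(1-4)] by simp
next
  case (insert a F)
  interpret M: abelian_group M by fact
  interpret N: abelian_group N by fact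
  have g: "g \<in> F \<rightarrow> carrier M" "g a \<in> carrier M" using insert.prems by auto
  have "h (finsum M g (insert a F)) = h (g a \<oplus>\<^bsub>M\<^esub> finsum M g F)"
    using insert g by (simp add: M.finsum_insert)
  also have "\<dots> = h (g a) \<oplus>\<^bsub>N\<^esub> h (finsum M g F)" using assms(4) g by (simp add: M.finsum_closed)
  also have "\<dots> = h (g a) \<oplus>\<^bsub>N\<^esub> finsum N (\<lambda>i. h (g i)) F" using insert g by simp
  also have "\<dots> = finsum N (\<lambda>i. h (g i)) (insert a F)"
    using insert g assms(3) by (subst N.finsum_insert) auto
  finally show ?case .
qed

locale cs = R: ring R + S: ring S for R :: "'r ring" and S :: "'s ring" and \<iota> :: "'r \<Rightarrow> 's" +
  assumes hom: "\<iota> \<in> ring_hom R S"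
begin

abbreviation "C \<equiv> Cstar R S \<iota>"

lemma iota_closed[simp]: "r \<in> carrier R \<Longrightarrow> \<iota> r \<in> carrier S"
  using hom by (simp add: ring_hom_closed)
lemma iota_mult: "r \<in> carrier R \<Longrightarrow> s \<in> carrier R \<Longrightarrow> \<iota> (r \<otimes>\<^bsub>R\<^esub> s) = \<iota> r \<otimes>\<^bsub>S\<^esub> \<iota> s"
  using hom by (simp add: ring_hom_mult)
lemma iota_add: "r \<in> carrier R \<Longrightarrow> s \<in> carrier R \<Longrightarrow> \<iota> (r \<oplus>\<^bsub>R\<^esub> s) = \<iota> r \<oplus>\<^bsub>S\<^esub> \<iota> s"
  using hom by (simp add: ring_hom_add)

lemma C_simps:
 "\<phi> \<otimes>\<^bsub>C\<^esub> \<psi> = restrict (\<psi> \<circ> \<phi>) (carrier S)"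
 "\<one>\<^bsub>C\<^esub> = restrict id (carrier S)"
 "\<zero>\<^bsub>C\<^esub> = restrict (\<lambda>_. \<zero>\<^bsub>S\<^esub>) (carrier S)"
 "\<phi> \<oplus>\<^bsub>C\<^esub> \<psi> = restrict (\<lambda>x. \<phi> x \<oplus>\<^bsub>S\<^esub> \<psi> x) (carrier S)"
  by (simp_all add: Cstar_def)

lemma memC: "\<phi> \<in> carrier C \<longleftrightarrow> \<phi> \<in> carrier S \<rightarrow>\<^sub>E carrier S \<and>
     (\<forall>x\<in>carrier S. \<forall>y\<in>carrier S. \<phi> (x \<oplus>\<^bsub>S\<^esub> y) = \<phi> x \<oplus>\<^bsub>S\<^esub> \<phi> y) \<and>
     (\<forall>r\<in>carrier R. \<forall>x\<in>carrier S. \<phi> (\<iota> r \<otimes>\<^bsub>S\<^esub> x) = \<iota> r \<otimes>\<^bsub>S\<^esub> \<phi> x)"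
  by (simp add: Cstar_def R_linear_endo_def)

lemma C_app[simp]: "\<phi> \<in> carrier C \<Longrightarrow> x \<in> carrier S \<Longrightarrow> \<phi> x \<in> carrier S"
  unfolding memC by auto
lemma C_add: "\<phi> \<in> carrier C \<Longrightarrow> x \<in> carrier S \<Longrightarrow> y \<in> carrier S \<Longrightarrow> \<phi> (x \<oplus>\<^bsub>S\<^esub> y) = \<phi> x \<oplus>\<^bsub>S\<^esub> \<phi> y"
  unfolding memC by auto
lemma C_lin: "\<phi> \<in> carrier C \<Longrightarrow> r \<in> carrier R \<Longrightarrow> x \<in> carrier S \<Longrightarrow> \<phi> (\<iota> r \<otimes>\<^bsub>S\<^esub> x) = \<iota> r \<otimes>\<^bsub>S\<^esub> \<phi> x"
  unfolding memC by auto
lemma C_ext: "\<phi> \<in> carrier C \<Longrightarrow> \<phi> \<in> extensional (carrier S)"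
  unfolding memC by (auto simp: PiE_iff)
lemma C_eqI: "\<phi> \<in> carrier C \<Longrightarrow> \<psi> \<in> carrier C \<Longrightarrow> (\<And>x. x \<in> carrier S \<Longrightarrow> \<phi> x = \<psi> x) \<Longrightarrow> \<phi> = \<psi>"
  by (rule extensionalityI[OF C_ext C_ext]) auto

lemma C_add_closed: "\<phi> \<in> carrier C \<Longrightarrow> \<psi> \<in> carrier C \<Longrightarrow> \<phi> \<oplus>\<^bsub>C\<^esub> \<psi> \<in> carrier C"
  unfolding C_simps memC[of "restrict _ _"]
  by (auto simp: C_add C_lin S.a_ac S.r_distr)

lemma C_zero_closed: "\<zero>\<^bsub>C\<^esub> \<in> carrier C"
  unfolding C_simps memC[of "restrict _ _"] by auto

lemma C_one_closed: "\<one>\<^bsub>C\<^esub> \<in> carrier C"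
  unfolding C_simps memC[of "restrict _ _"] by auto

lemma C_mult_closed: "\<phi> \<in> carrier C \<Longrightarrow> \<psi> \<in> carrier C \<Longrightarrow> \<phi> \<otimes>\<^bsub>C\<^esub> \<psi> \<in> carrier C"
  unfolding C_simps memC[of "restrict _ _"]
  by (auto simp: C_add C_lin)

lemma C_neg_closed: "\<phi> \<in> carrier C \<Longrightarrow> restrict (\<lambda>x. \<ominus>\<^bsub>S\<^esub> \<phi> x) (carrier S) \<in> carrier C"
  unfolding memC[of "restrict _ _"]
  by (auto simp: C_add C_lin S.minus_add S.r_minus)

lemma rmult_closed: "a \<in> carrier S \<Longrightarrow> rmult S a \<in> carrier C"
  unfolding rmult_def memC[of "restrict _ _"]
  by (auto simp: S.l_distr S.m_assoc)

lemma C_abelian_group: "abelian_group C"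
proof (rule abelian_groupI)
  fix x y z assume xyz: "x \<in> carrier C" "y \<in> carrier C" "z \<in> carrier C"
  show "x \<oplus>\<^bsub>C\<^esub> y \<in> carrier C" using xyz C_add_closed by blast
  show "x \<oplus>\<^bsub>C\<^esub> y \<oplus>\<^bsub>C\<^esub> z = x \<oplus>\<^bsub>C\<^esub> (y \<oplus>\<^bsub>C\<^esub> z)"
    unfolding C_simps using xyz by (intro restrict_ext) (simp add: S.a_assoc)
  show "x \<oplus>\<^bsub>C\<^esub> y = y \<oplus>\<^bsub>C\<^esub> x"
    unfolding C_simps using xyz by (intro restrict_ext) (simp add: S.a_comm)
next
  show "\<zero>\<^bsub>C\<^esub> \<in> carrier C" by (rule C_zero_closed)
next
  fix x assume x: "x \<in> carrier C"
  show "\<zero>\<^bsub>C\<^esub> \<oplus>\<^bsub>C\<^esub> x = x"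
    using x C_add_closed[OF C_zero_closed x] by (intro C_eqI) (auto simp: C_simps)
  show "\<exists>y\<in>carrier C. y \<oplus>\<^bsub>C\<^esub> x = \<zero>\<^bsub>C\<^esub>"
    using x C_neg_closed[OF x] by (intro bexI[of _ "restrict (\<lambda>x'. \<ominus>\<^bsub>S\<^esub> x x') (carrier S)"])
       (auto simp: C_simps intro!: restrict_ext S.l_neg)
qed

lemma C_module: "right_Cstar_module R S \<iota> C (monoid.mult C)"
  unfolding right_Cstar_module_def
proof (intro conjI ballI)
  show "abelian_group C" by (rule C_abelian_group)
  fix m n \<phi> \<psi> assume m: "m \<in> carrier C" and n: "n \<in> carrier C" and \<phi>: "\<phi> \<in> carrier C" and \<psi>: "\<psi> \<in> carrier C"
  show "m \<otimes>\<^bsub>C\<^esub> \<phi> \<in> carrier C" using m \<phi> by (rule C_mult_closed)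
  show "(m \<oplus>\<^bsub>C\<^esub> n) \<otimes>\<^bsub>C\<^esub> \<phi> = m \<otimes>\<^bsub>C\<^esub> \<phi> \<oplus>\<^bsub>C\<^esub> n \<otimes>\<^bsub>C\<^esub> \<phi>"
    unfolding C_simps using m n \<phi> by (intro restrict_ext) (simp add: C_add)
  show "m \<otimes>\<^bsub>C\<^esub> (\<phi> \<oplus>\<^bsub>C\<^esub> \<psi>) = m \<otimes>\<^bsub>C\<^esub> \<phi> \<oplus>\<^bsub>C\<^esub> m \<otimes>\<^bsub>C\<^esub> \<psi>"
    unfolding C_simps using m \<phi> \<psi> by (intro restrict_ext) simp
  show "m \<otimes>\<^bsub>C\<^esub> (\<phi> \<otimes>\<^bsub>C\<^esub> \<psi>) = m \<otimes>\<^bsub>C\<^esub> \<phi> \<otimes>\<^bsub>C\<^esub> \<psi>"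
    unfolding C_simps using m \<phi> \<psi> by (intro restrict_ext) simp
next
  fix m assume m: "m \<in> carrier C"
  show "m \<otimes>\<^bsub>C\<^esub> \<one>\<^bsub>C\<^esub> = m"
    using m C_mult_closed[OF m C_one_closed] by (intro C_eqI) (auto simp: C_simps)
qed


lemma C_finsum_apply:
  assumes "finite A" "x \<in> carrier S"
  shows "g \<in> A \<rightarrow> carrier C \<Longrightarrow> finsum C g A x = finsum S (\<lambda>j. g j x) A"
  using assms(1)
proof (induction A rule: finite_induct)
  case empty
  interpret Ca: abelian_group C by (rule C_abelian_group)
  show ?case using assms(2) by (simp add: C_simps)
next
  case (insert a F)
  interpret Ca: abelian_group C by (rule C_abelian_group)
  have g: "g \<in> F \<rightarrow> carrier C" "g a \<in> carrier C" using insert.prems by auto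
  have "finsum C g (insert a F) x = (g a \<oplus>\<^bsub>C\<^esub> finsum C g F) x"
    using insert g by (simp add: Ca.finsum_insert)
  also have "\<dots> = g a x \<oplus>\<^bsub>S\<^esub> finsum S (\<lambda>j. g j x) F"
    using insert g assms(2) by (simp add: C_simps)
  also have "\<dots> = finsum S (\<lambda>j. g j x) (insert a F)"
  proof -
    have "(\<lambda>j. g j x) \<in> F \<rightarrow> carrier S"
    proof
      fix j assume "j \<in> F" then have "g j \<in> carrier C" using g(1) by blast
      then show "g j x \<in> carrier S" by (rule C_app[OF _ assms(2)])
    qed
    then show ?thesis using insert g assms(2) by (subst S.finsum_insert) auto
  qed
  finally show ?case .
qed

lemma act_finsum:
  assumes M: "right_Cstar_module R S \<iota> M act" and m: "m \<in> carrier M" and "finite A"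
  shows "g \<in> A \<rightarrow> carrier C \<Longrightarrow> act m (finsum C g A) = finsum M (\<lambda>j. act m (g j)) A"
  using assms(3)
proof (induction A rule: finite_induct)
  case empty
  interpret Ca: abelian_group C by (rule C_abelian_group)
  interpret Ma: abelian_group M using M unfolding right_Cstar_module_def by blast
  have cl: "act m \<zero>\<^bsub>C\<^esub> \<in> carrier M" using M m C_zero_closed unfolding right_Cstar_module_def by blast
  have "act m (\<zero>\<^bsub>C\<^esub> \<oplus>\<^bsub>C\<^esub> \<zero>\<^bsub>C\<^esub>) = act m \<zero>\<^bsub>C\<^esub> \<oplus>\<^bsub>M\<^esub> act m \<zero>\<^bsub>C\<^esub>"
    using M m C_zero_closed unfolding right_Cstar_module_def by blast
  then have "act m \<zero>\<^bsub>C\<^esub> = \<zero>\<^bsub>M\<^esub>" using cl by (intro Ma.idem_zero) auto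
  then show ?case by simp
next
  case (insert a F)
  interpret Ca: abelian_group C by (rule C_abelian_group)
  interpret Ma: abelian_group M using M unfolding right_Cstar_module_def by blast
  have g: "g \<in> F \<rightarrow> carrier C" "g a \<in> carrier C" using insert.prems by auto
  have cl: "\<And>\<phi>. \<phi> \<in> carrier C \<Longrightarrow> act m \<phi> \<in> carrier M" using M m unfolding right_Cstar_module_def by blast
  have "act m (finsum C g (insert a F)) = act m (g a \<oplus>\<^bsub>C\<^esub> finsum C g F)"
    using insert g by (simp add: Ca.finsum_insert)
  also have "\<dots> = act m (g a) \<oplus>\<^bsub>M\<^esub> act m (finsum C g F)"
    using M m g Ca.finsum_closed[OF g(1)] unfolding right_Cstar_module_def by blast
  also have "\<dots> = act m (g a) \<oplus>\<^bsub>M\<^esub> finsum M (\<lambda>j. act m (g j)) F" using insert g by simp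
  also have "\<dots> = finsum M (\<lambda>j. act m (g j)) (insert a F)"
    using insert g cl by (subst Ma.finsum_insert) auto
  finally show ?case .
qed

end

definition basis_ok :: "('r,'a) ring_scheme \<Rightarrow> ('s,'b) ring_scheme \<Rightarrow> ('r \<Rightarrow> 's) \<Rightarrow> (('s \<Rightarrow> 'r) \<times> 's) list \<Rightarrow> bool" where
  "basis_ok R S \<iota> bs \<longleftrightarrow> (\<forall>(f,e)\<in>set bs. e \<in> carrier S \<and> f \<in> carrier S \<rightarrow> carrier R \<and>
             (\<forall>x\<in>carrier S. \<forall>y\<in>carrier S. f (x \<oplus>\<^bsub>S\<^esub> y) = f x \<oplus>\<^bsub>R\<^esub> f y) \<and>
             (\<forall>r\<in>carrier R. \<forall>x\<in>carrier S. f (\<iota> r \<otimes>\<^bsub>S\<^esub> x) = r \<otimes>\<^bsub>R\<^esub> f x))"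

definition chi :: "('s,'b) ring_scheme \<Rightarrow> ('r \<Rightarrow> 's) \<Rightarrow> ('s \<Rightarrow> 'r) \<Rightarrow> ('s \<Rightarrow> 's)" where
  "chi S \<iota> f = restrict (\<lambda>x. \<iota> (f x)) (carrier S)"

definition approx where
  "approx R S \<iota> bs \<phi> = finsum (Cstar R S \<iota>)
     (\<lambda>j. chi S \<iota> (fst (bs!j)) \<otimes>\<^bsub>Cstar R S \<iota>\<^esub> rmult S (\<phi> (snd (bs!j)))) {..<length bs}"

context cs begin

lemma basis_nth:
  assumes "basis_ok R S \<iota> bs" "j < length bs"
  shows "snd (bs!j) \<in> carrier S" "fst (bs!j) \<in> carrier S \<rightarrow> carrier R"
    "\<And>x y. x\<in>carrier S \<Longrightarrow> y\<in>carrier S \<Longrightarrow> fst (bs!j) (x \<oplus>\<^bsub>S\<^esub> y) = fst (bs!j) x \<oplus>\<^bsub>R\<^esub> fst (bs!j) y"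
    "\<And>r x. r\<in>carrier R \<Longrightarrow> x\<in>carrier S \<Longrightarrow> fst (bs!j) (\<iota> r \<otimes>\<^bsub>S\<^esub> x) = r \<otimes>\<^bsub>R\<^esub> fst (bs!j) x"
  using assms nth_mem[OF assms(2)] unfolding basis_ok_def by (auto simp: case_prod_beta)

lemma basis_f_closed: "basis_ok R S \<iota> bs \<Longrightarrow> j < length bs \<Longrightarrow> x \<in> carrier S \<Longrightarrow> fst (bs!j) x \<in> carrier R"
  using basis_nth(2) by blast

lemma chi_closed:
  assumes "basis_ok R S \<iota> bs" "j < length bs"
  shows "chi S \<iota> (fst (bs!j)) \<in> carrier C"
  unfolding chi_def memC[of "restrict _ _"]
  using basis_nth[OF assms] basis_f_closed[OF assms]
  by (auto simp: iota_add iota_mult)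

lemma approx_terms_closed:
  assumes "basis_ok R S \<iota> bs" "\<phi> \<in> carrier C"
  shows "(\<lambda>j. chi S \<iota> (fst (bs!j)) \<otimes>\<^bsub>C\<^esub> rmult S (\<phi> (snd (bs!j)))) \<in> {..<length bs} \<rightarrow> carrier C"
  using assms chi_closed basis_nth(1) by (auto intro!: C_mult_closed rmult_closed)

lemma approx_closed:
  assumes "basis_ok R S \<iota> bs" "\<phi> \<in> carrier C"
  shows "approx R S \<iota> bs \<phi> \<in> carrier C"
proof -
  interpret Ca: abelian_group C by (rule C_abelian_group)
  show ?thesis unfolding approx_def using approx_terms_closed[OF assms] by (rule Ca.finsum_closed)
qed

lemma approx_apply:
  assumes "basis_ok R S \<iota> bs" "\<phi> \<in> carrier C" "x \<in> carrier S"
  shows "approx R S \<iota> bs \<phi> x = (\<Oplus>\<^bsub>S\<^esub> j\<in>{..<length bs}. \<iota> (fst (bs!j) x) \<otimes>\<^bsub>S\<^esub> \<phi> (snd (bs!j)))"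
  unfolding approx_def
  apply (subst C_finsum_apply[OF _ assms(3) approx_terms_closed[OF assms(1,2)]], simp)
  apply (rule S.finsum_cong')
  using assms basis_f_closed basis_nth(1) by (auto simp: C_simps chi_def rmult_def)

lemma approx_comp:
  assumes "basis_ok R S \<iota> bs" "\<phi> \<in> carrier C" "x \<in> carrier S"
  shows "approx R S \<iota> bs \<phi> x = \<phi> (approx R S \<iota> bs \<one>\<^bsub>C\<^esub> x)"
proof -
  have "\<phi> (approx R S \<iota> bs \<one>\<^bsub>C\<^esub> x) = \<phi> (\<Oplus>\<^bsub>S\<^esub> j\<in>{..<length bs}. \<iota> (fst (bs!j) x) \<otimes>\<^bsub>S\<^esub> snd (bs!j))"
  proof -
    have "approx R S \<iota> bs \<one>\<^bsub>C\<^esub> x = (\<Oplus>\<^bsub>S\<^esub> j\<in>{..<length bs}. \<iota> (fst (bs!j) x) \<otimes>\<^bsub>S\<^esub> \<one>\<^bsub>C\<^esub> (snd (bs!j)))"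
      by (rule approx_apply[OF assms(1) C_one_closed assms(3)])
    also have "\<dots> = (\<Oplus>\<^bsub>S\<^esub> j\<in>{..<length bs}. \<iota> (fst (bs!j) x) \<otimes>\<^bsub>S\<^esub> snd (bs!j))"
      using assms basis_nth(1) basis_f_closed by (auto simp: C_simps intro!: S.finsum_cong')
    finally show ?thesis by simp
  qed
  also have "\<dots> = (\<Oplus>\<^bsub>S\<^esub> j\<in>{..<length bs}. \<phi> (\<iota> (fst (bs!j) x) \<otimes>\<^bsub>S\<^esub> snd (bs!j)))"
    apply (rule add_hom_finsum[OF S.abelian_group_axioms S.abelian_group_axioms])
    using assms basis_f_closed basis_nth(1) by (auto simp: C_add)
  also have "\<dots> = approx R S \<iota> bs \<phi> x"
    using approx_apply[OF assms] assms basis_f_closed basis_nth(1)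
    by (auto simp: C_lin intro!: S.finsum_cong')
  finally show ?thesis by simp
qed


lemma approx_one_apply:
  assumes "basis_ok R S \<iota> bs" "x \<in> carrier S"
  shows "approx R S \<iota> bs \<one>\<^bsub>C\<^esub> x = (\<Oplus>\<^bsub>S\<^esub> j\<in>{..<length bs}. \<iota> (fst (bs!j) x) \<otimes>\<^bsub>S\<^esub> snd (bs!j))"
proof -
  have "approx R S \<iota> bs \<one>\<^bsub>C\<^esub> x = (\<Oplus>\<^bsub>S\<^esub> j\<in>{..<length bs}. \<iota> (fst (bs!j) x) \<otimes>\<^bsub>S\<^esub> \<one>\<^bsub>C\<^esub> (snd (bs!j)))"
    by (rule approx_apply[OF assms(1) C_one_closed assms(2)])
  also have "\<dots> = (\<Oplus>\<^bsub>S\<^esub> j\<in>{..<length bs}. \<iota> (fst (bs!j) x) \<otimes>\<^bsub>S\<^esub> snd (bs!j))"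
    using assms basis_nth(1) basis_f_closed by (auto simp: C_simps intro!: S.finsum_cong')
  finally show ?thesis .
qed

lemma approx_fix:
  assumes "basis_ok R S \<iota> bs" "\<phi> \<in> carrier C" "x \<in> carrier S"
    "x = (\<Oplus>\<^bsub>S\<^esub> j\<in>{..<length bs}. \<iota> (fst (bs!j) x) \<otimes>\<^bsub>S\<^esub> snd (bs!j))"
  shows "approx R S \<iota> bs \<phi> x = \<phi> x"
  using approx_comp[OF assms(1-3)] approx_one_apply[OF assms(1,3)] assms(4) by simp

lemma approx_mult:
  assumes "basis_ok R S \<iota> bs" "\<phi> \<in> carrier C"
  shows "approx R S \<iota> bs \<one>\<^bsub>C\<^esub> \<otimes>\<^bsub>C\<^esub> \<phi> = approx R S \<iota> bs \<phi>"
proof (rule C_eqI)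
  show "approx R S \<iota> bs \<one>\<^bsub>C\<^esub> \<otimes>\<^bsub>C\<^esub> \<phi> \<in> carrier C"
    using assms approx_closed C_one_closed C_mult_closed by blast
  show "approx R S \<iota> bs \<phi> \<in> carrier C" using assms approx_closed by blast
  fix x assume x: "x \<in> carrier S"
  show "(approx R S \<iota> bs \<one>\<^bsub>C\<^esub> \<otimes>\<^bsub>C\<^esub> \<phi>) x = approx R S \<iota> bs \<phi> x"
    using approx_comp[OF assms x] x by (simp add: C_simps(1))
qed

lemma mod_facts:
  assumes "right_Cstar_module R S \<iota> M act"
  shows "abelian_group M" "\<And>m \<phi>. m \<in> carrier M \<Longrightarrow> \<phi> \<in> carrier C \<Longrightarrow> act m \<phi> \<in> carrier M"
   "\<And>m n \<phi>. m \<in> carrier M \<Longrightarrow> n \<in> carrier M \<Longrightarrow> \<phi> \<in> carrier C \<Longrightarrow> act (m \<oplus>\<^bsub>M\<^esub> n) \<phi> = act m \<phi> \<oplus>\<^bsub>M\<^esub> act n \<phi>"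
   "\<And>m \<phi> \<psi>. m \<in> carrier M \<Longrightarrow> \<phi> \<in> carrier C \<Longrightarrow> \<psi> \<in> carrier C \<Longrightarrow> act m (\<phi> \<otimes>\<^bsub>C\<^esub> \<psi>) = act (act m \<phi>) \<psi>"
   "\<And>m. m \<in> carrier M \<Longrightarrow> act m \<one>\<^bsub>C\<^esub> = m"
  using assms unfolding right_Cstar_module_def by blast+

lemma act_approx:
  assumes M: "right_Cstar_module R S \<iota> M act" and m: "m \<in> carrier M"
    and bs: "basis_ok R S \<iota> bs" and \<phi>: "\<phi> \<in> carrier C"
  shows "act m (approx R S \<iota> bs \<phi>) =
     finsum M (\<lambda>j. act (act m (chi S \<iota> (fst (bs!j)))) (rmult S (\<phi> (snd (bs!j))))) {..<length bs}"
proof -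
  interpret Ma: abelian_group M by (rule mod_facts(1)[OF M])
  show ?thesis
    unfolding approx_def
    apply (subst act_finsum[OF M m _ approx_terms_closed[OF bs \<phi>]], simp)
  proof (rule Ma.finsum_cong'[OF refl])
    have c: "chi S \<iota> (fst (bs!j)) \<in> carrier C" "rmult S (\<phi> (snd (bs!j))) \<in> carrier C"
      if "j \<in> {..<length bs}" for j
      using that chi_closed[OF bs] rmult_closed basis_nth(1)[OF bs] \<phi> by auto
    show "(\<lambda>j. act (act m (chi S \<iota> (fst (bs!j)))) (rmult S (\<phi> (snd (bs!j))))) \<in> {..<length bs} \<rightarrow> carrier M"
      using c mod_facts(2)[OF M] m by blast
    show "act m (chi S \<iota> (fst (bs!j)) \<otimes>\<^bsub>C\<^esub> rmult S (\<phi> (snd (bs!j)))) =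
        act (act m (chi S \<iota> (fst (bs!j)))) (rmult S (\<phi> (snd (bs!j))))" if "j \<in> {..<length bs}" for j
      using c[OF that] mod_facts(4)[OF M m] by blast
  qed
qed

lemma coring_eval_single:
  assumes "t \<in> carrier S" "t' \<in> carrier S" "\<phi> \<in> carrier C"
  shows "coring_eval S \<phi> [(t,t')] = t \<otimes>\<^bsub>S\<^esub> \<phi> t'"
proof -
  have "{..<length [(t,t')]} = insert 0 {}" by auto
  then show ?thesis unfolding coring_eval_def using assms by (simp add: S.finsum_insert)
qed

lemma RatI':
  assumes M: "right_Cstar_module R S \<iota> M act" and m: "m \<in> carrier M"
    and bs: "basis_ok R S \<iota> bs" and n: "\<And>j. j < length bs \<Longrightarrow> n j \<in> carrier M"
    and eq: "\<And>\<phi>. \<phi> \<in> carrier C \<Longrightarrow> act m \<phi> = finsum M (\<lambda>j. act (n j) (rmult S (\<phi> (snd (bs!j))))) {..<length bs}"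
  shows "m \<in> Rat R S \<iota> M act"
proof -
  interpret Ma: abelian_group M by (rule mod_facts(1)[OF M])
  define xs where "xs = map (\<lambda>j. (n j, \<one>\<^bsub>S\<^esub>, snd (bs!j))) [0..<length bs]"
  have 1: "\<forall>(n,t,t')\<in>set xs. n \<in> carrier M \<and> t \<in> carrier S \<and> t' \<in> carrier S"
    unfolding xs_def using n basis_nth(1)[OF bs] by auto
  have 2: "act m \<phi> = (\<Oplus>\<^bsub>M\<^esub> i\<in>{..<length xs}. act (fst (xs!i)) (rmult S (coring_eval S \<phi> [snd (xs!i)])))"
    if \<phi>: "\<phi> \<in> carrier C" for \<phi>
    unfolding eq[OF \<phi>] xs_def
    apply (rule Ma.finsum_cong')
    using n basis_nth(1)[OF bs] \<phi> rmult_closed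
    by (auto simp: coring_eval_single mod_facts[OF M])
  show ?thesis unfolding Rat_def using m 1 2 by blast
qed

lemma RatGen:
  assumes M: "right_Cstar_module R S \<iota> M act" and m: "m \<in> carrier M"
    and bs: "basis_ok R S \<iota> bs"
  shows "act m (approx R S \<iota> bs \<one>\<^bsub>C\<^esub>) \<in> Rat R S \<iota> M act"
proof -
  have a1: "approx R S \<iota> bs \<one>\<^bsub>C\<^esub> \<in> carrier C" by (rule approx_closed[OF bs C_one_closed])
  show ?thesis
  proof (rule RatI'[OF M mod_facts(2)[OF M m a1] bs])
    fix j assume "j < length bs"
    then show "act m (chi S \<iota> (fst (bs!j))) \<in> carrier M" using mod_facts(2)[OF M m] chi_closed[OF bs] by blast
  next
    fix \<phi> assume \<phi>: "\<phi> \<in> carrier C"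
    have "act (act m (approx R S \<iota> bs \<one>\<^bsub>C\<^esub>)) \<phi> = act m (approx R S \<iota> bs \<phi>)"
      using mod_facts(4)[OF M m a1 \<phi>] approx_mult[OF bs \<phi>] by simp
    then show "act (act m (approx R S \<iota> bs \<one>\<^bsub>C\<^esub>)) \<phi> =
      finsum M (\<lambda>j. act (act m (chi S \<iota> (fst (bs!j)))) (rmult S (\<phi> (snd (bs!j))))) {..<length bs}"
      using act_approx[OF M m bs \<phi>] by simp
  qed
qed

lemma hom_Rat:
  assumes M: "right_Cstar_module R S \<iota> M a" and N: "right_Cstar_module R S \<iota> N b"
    and h: "Cstar_mod_hom R S \<iota> M a N b h" and y: "y \<in> Rat R S \<iota> M a"
  shows "h y \<in> Rat R S \<iota> N b"
proof -
  interpret Ma: abelian_group M by (rule mod_facts(1)[OF M])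
  interpret Na: abelian_group N by (rule mod_facts(1)[OF N])
  have hc: "h \<in> carrier M \<rightarrow> carrier N" and hadd: "\<forall>x\<in>carrier M. \<forall>y\<in>carrier M. h (x \<oplus>\<^bsub>M\<^esub> y) = h x \<oplus>\<^bsub>N\<^esub> h y"
    and hact: "\<And>x \<phi>. x \<in> carrier M \<Longrightarrow> \<phi> \<in> carrier C \<Longrightarrow> h (a x \<phi>) = b (h x) \<phi>"
    using h unfolding Cstar_mod_hom_def by auto
  obtain xs where ym: "y \<in> carrier M" and xs1: "\<forall>(n,t,t')\<in>set xs. n \<in> carrier M \<and> t \<in> carrier S \<and> t' \<in> carrier S"
    and xs2: "\<forall>\<phi>\<in>carrier C. a y \<phi> = (\<Oplus>\<^bsub>M\<^esub> i\<in>{..<length xs}. a (fst (xs!i)) (rmult S (coring_eval S \<phi> [snd (xs!i)])))"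
    using y unfolding Rat_def by blast
  define ys where "ys = map (\<lambda>(n,p). (h n, p)) xs"
  have len: "length ys = length xs" unfolding ys_def by simp
  have xsi: "fst (xs!i) \<in> carrier M" "fst (snd (xs!i)) \<in> carrier S" "snd (snd (xs!i)) \<in> carrier S"
    if "i < length xs" for i using xs1 nth_mem[OF that] by auto
  have ysi: "ys!i = (h (fst (xs!i)), snd (xs!i))" if "i < length xs" for i
    unfolding ys_def using that by (simp add: case_prod_beta)
  have rm: "rmult S (coring_eval S \<phi> [snd (xs!i)]) \<in> carrier C"
    if "i < length xs" "\<phi> \<in> carrier C" for i \<phi>
    using xsi[OF that(1)] that(2)
    by (cases "snd (xs!i)") (auto simp: coring_eval_single intro!: rmult_closed)
  have 1: "\<forall>(n,t,t')\<in>set ys. n \<in> carrier N \<and> t \<in> carrier S \<and> t' \<in> carrier S"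
    unfolding ys_def using xs1 hc by auto
  have 2: "b (h y) \<phi> = (\<Oplus>\<^bsub>N\<^esub> i\<in>{..<length ys}. b (fst (ys!i)) (rmult S (coring_eval S \<phi> [snd (ys!i)])))"
    if \<phi>: "\<phi> \<in> carrier C" for \<phi>
  proof -
    have "b (h y) \<phi> = h (a y \<phi>)" using hact[OF ym \<phi>] by simp
    also have "\<dots> = h (\<Oplus>\<^bsub>M\<^esub> i\<in>{..<length xs}. a (fst (xs!i)) (rmult S (coring_eval S \<phi> [snd (xs!i)])))"
      using xs2 \<phi> by simp
    also have "\<dots> = (\<Oplus>\<^bsub>N\<^esub> i\<in>{..<length xs}. h (a (fst (xs!i)) (rmult S (coring_eval S \<phi> [snd (xs!i)]))))"
      apply (rule add_hom_finsum[OF Ma.abelian_group_axioms Na.abelian_group_axioms hc hadd])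
      using xsi rm \<phi> mod_facts(2)[OF M] by auto
    also have "\<dots> = (\<Oplus>\<^bsub>N\<^esub> i\<in>{..<length ys}. b (fst (ys!i)) (rmult S (coring_eval S \<phi> [snd (ys!i)])))"
      unfolding len
      apply (rule Na.finsum_cong')
      using xsi rm \<phi> hact ysi hc mod_facts(2)[OF N] by (auto intro!: mod_facts(2)[OF N] funcset_mem[OF hc])
    finally show ?thesis .
  qed
  show ?thesis unfolding Rat_def using 1 2 ym hc by blast
qed

lemma lp_basis:
  assumes "locally_projective_left R S \<iota>" "finite G" "G \<subseteq> carrier S"
  shows "\<exists>bs. basis_ok R S \<iota> bs \<and> (\<forall>x\<in>G. x = (\<Oplus>\<^bsub>S\<^esub> i\<in>{..<length bs}. \<iota> (fst (bs!i) x) \<otimes>\<^bsub>S\<^esub> snd (bs!i)))"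
proof -
  from assms obtain bs :: "(('s \<Rightarrow> 'r) \<times> 's) list" where
    "(\<forall>(f,e)\<in>set bs. e \<in> carrier S \<and> f \<in> carrier S \<rightarrow> carrier R \<and>
             (\<forall>x\<in>carrier S. \<forall>y\<in>carrier S. f (x \<oplus>\<^bsub>S\<^esub> y) = f x \<oplus>\<^bsub>R\<^esub> f y) \<and>
             (\<forall>r\<in>carrier R. \<forall>x\<in>carrier S. f (\<iota> r \<otimes>\<^bsub>S\<^esub> x) = r \<otimes>\<^bsub>R\<^esub> f x))"
    and "(\<forall>x\<in>G. x = (\<Oplus>\<^bsub>S\<^esub> i\<in>{..<length bs}. \<iota> (fst (bs!i) x) \<otimes>\<^bsub>S\<^esub> snd (bs!i)))"
    unfolding locally_projective_left_def by meson
  then show ?thesis unfolding basis_ok_def by blast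
qed

lemma Rat_approx:
  assumes M: "right_Cstar_module R S \<iota> M act" and lp: "locally_projective_left R S \<iota>"
    and y: "y \<in> Rat R S \<iota> M act"
  shows "\<exists>bs. basis_ok R S \<iota> bs \<and> (\<forall>\<phi>\<in>carrier C. act y \<phi> = act y (approx R S \<iota> bs \<phi>))"
proof -
  interpret Ma: abelian_group M by (rule mod_facts(1)[OF M])
  obtain xs where ym: "y \<in> carrier M" and xs1: "\<forall>(n,t,t')\<in>set xs. n \<in> carrier M \<and> t \<in> carrier S \<and> t' \<in> carrier S"
    and xs2: "\<forall>\<phi>\<in>carrier C. act y \<phi> = (\<Oplus>\<^bsub>M\<^esub> i\<in>{..<length xs}. act (fst (xs!i)) (rmult S (coring_eval S \<phi> [snd (xs!i)])))"
    using y unfolding Rat_def by blast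
  have xsi: "fst (xs!i) \<in> carrier M" "fst (snd (xs!i)) \<in> carrier S" "snd (snd (xs!i)) \<in> carrier S"
    if "i < length xs" for i using xs1 nth_mem[OF that] by auto
  define G where "G = (\<lambda>p. snd (snd p)) ` set xs"
  have "finite G \<and> G \<subseteq> carrier S" unfolding G_def using xs1 by auto
  then obtain bs where bs: "basis_ok R S \<iota> bs"
    and bsG: "\<forall>x\<in>G. x = (\<Oplus>\<^bsub>S\<^esub> i\<in>{..<length bs}. \<iota> (fst (bs!i) x) \<otimes>\<^bsub>S\<^esub> snd (bs!i))"
    using lp_basis[OF lp] by blast
  have "act y \<phi> = act y (approx R S \<iota> bs \<phi>)" if \<phi>: "\<phi> \<in> carrier C" for \<phi>
  proof -
    have a: "approx R S \<iota> bs \<phi> \<in> carrier C" by (rule approx_closed[OF bs \<phi>])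
    have ce: "coring_eval S (approx R S \<iota> bs \<phi>) [snd (xs!i)] = coring_eval S \<phi> [snd (xs!i)]"
      if i: "i < length xs" for i
    proof -
      have G: "snd (snd (xs!i)) \<in> G" unfolding G_def using i by auto
      have "coring_eval S (approx R S \<iota> bs \<phi>) [snd (xs!i)] = fst (snd (xs!i)) \<otimes>\<^bsub>S\<^esub> approx R S \<iota> bs \<phi> (snd (snd (xs!i)))"
        using coring_eval_single[OF xsi(2,3)[OF i] a] by simp
      also have "\<dots> = fst (snd (xs!i)) \<otimes>\<^bsub>S\<^esub> \<phi> (snd (snd (xs!i)))"
        using approx_fix[OF bs \<phi> xsi(3)[OF i]] bsG G by simp
      also have "\<dots> = coring_eval S \<phi> [snd (xs!i)]"
        using coring_eval_single[OF xsi(2,3)[OF i] \<phi>] by simp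
      finally show ?thesis .
    qed
    have "act y \<phi> = (\<Oplus>\<^bsub>M\<^esub> i\<in>{..<length xs}. act (fst (xs!i)) (rmult S (coring_eval S \<phi> [snd (xs!i)])))"
      using xs2 \<phi> by blast
    also have "\<dots> = (\<Oplus>\<^bsub>M\<^esub> i\<in>{..<length xs}. act (fst (xs!i)) (rmult S (coring_eval S (approx R S \<iota> bs \<phi>) [snd (xs!i)])))"
    proof (rule Ma.finsum_cong'[OF refl])
      have "rmult S (coring_eval S (approx R S \<iota> bs \<phi>) [snd (xs!i)]) \<in> carrier C" if "i < length xs" for i
        using coring_eval_single[OF xsi(2,3)[OF that] a] xsi(2,3)[OF that] a
        by (auto intro!: rmult_closed)
      then show "(\<lambda>i. act (fst (xs!i)) (rmult S (coring_eval S (approx R S \<iota> bs \<phi>) [snd (xs!i)]))) \<in> {..<length xs} \<rightarrow> carrier M"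
        using xsi(1) mod_facts(2)[OF M] by auto
      fix i assume "i \<in> {..<length xs}"
      then show "act (fst (xs!i)) (rmult S (coring_eval S \<phi> [snd (xs!i)])) =
          act (fst (xs!i)) (rmult S (coring_eval S (approx R S \<iota> bs \<phi>) [snd (xs!i)]))"
        using ce by simp
    qed
    also have "\<dots> = act y (approx R S \<iota> bs \<phi>)" using xs2 a by simp
    finally show ?thesis .
  qed
  then show ?thesis using bs by blast
qed

end

lemma Rat_sub: "Rat R S \<iota> M act \<subseteq> carrier M" unfolding Rat_def by blast

theorem mainTheorem18:
  fixes R :: "'r ring" and S :: "'s ring" and \<iota> :: "'r \<Rightarrow> 's"
  assumes "ring R" and "ring S" and "\<iota> \<in> ring_hom R S"
    and "locally_projective_left R S \<iota>"
  shows "(\<forall>\<phi>\<in>carrier (Cstar R S \<iota>). \<forall>F. finite F \<and> (\<forall>c\<in>F. sweedler_elem S c) \<longrightarrow>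
            (\<exists>\<psi>\<in>Rat R S \<iota> (Cstar R S \<iota>) (monoid.mult (Cstar R S \<iota>)).
               \<forall>c\<in>F. coring_eval S \<psi> c = coring_eval S \<phi> c))
       \<and> (\<forall>(M1 :: 'a ring) a1 (M2 :: 'b ring) a2 (M3 :: 'c ring) a3 f g.
            right_Cstar_module R S \<iota> M1 a1 \<and> right_Cstar_module R S \<iota> M2 a2 \<and>
            right_Cstar_module R S \<iota> M3 a3 \<and>
            Cstar_mod_hom R S \<iota> M1 a1 M2 a2 f \<and> Cstar_mod_hom R S \<iota> M2 a2 M3 a3 g \<and>
            inj_on f (carrier M1) \<and>
            f ` carrier M1 = {y \<in> carrier M2. g y = \<zero>\<^bsub>M3\<^esub>} \<and>
            g ` carrier M2 = carrier M3
            \<longrightarrow>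
            inj_on f (Rat R S \<iota> M1 a1) \<and>
            f ` Rat R S \<iota> M1 a1 = {y \<in> Rat R S \<iota> M2 a2. g y = \<zero>\<^bsub>M3\<^esub>} \<and>
            g ` Rat R S \<iota> M2 a2 = Rat R S \<iota> M3 a3)"
proof -
  interpret cs R S \<iota> using assms(1-3) by (simp add: cs_def cs_axioms_def)
  note lp = assms(4)
  have P1: "\<exists>\<psi>\<in>Rat R S \<iota> C (monoid.mult C). \<forall>c\<in>F. coring_eval S \<psi> c = coring_eval S \<phi> c"
    if \<phi>: "\<phi> \<in> carrier C" and F: "finite F" and sw: "\<forall>c\<in>F. sweedler_elem S c" for \<phi> F
  proof -
    have cS: "fst (c!i) \<in> carrier S" "snd (c!i) \<in> carrier S" if "c \<in> F" "i < length c" for c i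
    proof -
      have "set c \<subseteq> carrier S \<times> carrier S" using sw that(1) unfolding sweedler_elem_def by blast
      then have "c!i \<in> carrier S \<times> carrier S" using nth_mem[OF that(2)] by (rule subsetD)
      then show "fst (c!i) \<in> carrier S" "snd (c!i) \<in> carrier S" by auto
    qed
    define G where "G = \<phi> ` (\<Union>c\<in>F. snd ` set c)"
    have "G \<subseteq> carrier S"
    proof
      fix y assume "y \<in> G"
      then obtain x where x: "x \<in> (\<Union>c\<in>F. snd ` set c)" "y = \<phi> x" unfolding G_def by (rule imageE)
      obtain c where c: "c \<in> F" "x \<in> snd ` set c" using x(1) by (rule UN_E)
      obtain q where q: "q \<in> set c" "x = snd q" using c(2) by (rule imageE)
      have "set c \<subseteq> carrier S \<times> carrier S" using sw c(1) unfolding sweedler_elem_def by blast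
      then have "q \<in> carrier S \<times> carrier S" using q(1) by (rule subsetD)
      then have "x \<in> carrier S" using q(2) by auto
      then show "y \<in> carrier S" using x(2) C_app[OF \<phi>] by simp
    qed
    moreover have "finite G" unfolding G_def using F by simp
    obtain bs where bsall: "basis_ok R S \<iota> bs \<and>
        (\<forall>x\<in>G. x = (\<Oplus>\<^bsub>S\<^esub> i\<in>{..<length bs}. \<iota> (fst (bs!i) x) \<otimes>\<^bsub>S\<^esub> snd (bs!i)))"
      using lp_basis[OF lp \<open>finite G\<close> \<open>G \<subseteq> carrier S\<close>] by (elim exE)
    have bs: "basis_ok R S \<iota> bs" using bsall by (rule conjunct1)
    have bsG: "\<forall>x\<in>G. x = (\<Oplus>\<^bsub>S\<^esub> i\<in>{..<length bs}. \<iota> (fst (bs!i) x) \<otimes>\<^bsub>S\<^esub> snd (bs!i))"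
      using bsall by (rule conjunct2)
    define \<psi> where "\<psi> = \<phi> \<otimes>\<^bsub>C\<^esub> approx R S \<iota> bs \<one>\<^bsub>C\<^esub>"
    have \<psi>R: "\<psi> \<in> Rat R S \<iota> C (monoid.mult C)" unfolding \<psi>_def
      by (rule RatGen[OF C_module \<phi> bs])
    have \<psi>x: "\<psi> x = \<phi> x" if cF: "c \<in> F" and xc: "x \<in> snd ` set c" for c x
    proof -
      obtain q where q: "q \<in> set c" "x = snd q" using xc by (rule imageE)
      have "set c \<subseteq> carrier S \<times> carrier S" using sw cF unfolding sweedler_elem_def by blast
      then have "q \<in> carrier S \<times> carrier S" using q(1) by (rule subsetD)
      then have x: "x \<in> carrier S" using q(2) by auto
      have G: "\<phi> x \<in> G" unfolding G_def using cF xc by auto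
      have "\<psi> x = approx R S \<iota> bs \<one>\<^bsub>C\<^esub> (\<phi> x)" unfolding \<psi>_def using x by (simp add: C_simps)
      also have "\<dots> = \<one>\<^bsub>C\<^esub> (\<phi> x)"
        using approx_fix[OF bs C_one_closed C_app[OF \<phi> x] bsG[rule_format, OF G]] by simp
      also have "\<dots> = \<phi> x" using x \<phi> by (simp add: C_simps)
      finally show ?thesis .
    qed
    have "coring_eval S \<psi> c = coring_eval S \<phi> c" if c: "c \<in> F" for c
      unfolding coring_eval_def
    proof (rule S.finsum_cong'[OF refl])
      show "(\<lambda>i. fst (c!i) \<otimes>\<^bsub>S\<^esub> \<phi> (snd (c!i))) \<in> {..<length c} \<rightarrow> carrier S"
        using cS[OF c] \<phi> by auto
      fix i assume "i \<in> {..<length c}"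
      then have "snd (c!i) \<in> snd ` set c" by auto
      then show "fst (c!i) \<otimes>\<^bsub>S\<^esub> \<psi> (snd (c!i)) = fst (c!i) \<otimes>\<^bsub>S\<^esub> \<phi> (snd (c!i))"
        using \<psi>x[OF c] by simp
    qed
    then show ?thesis using \<psi>R by blast
  qed
  have P2: "inj_on f (Rat R S \<iota> M1 a1) \<and>
            f ` Rat R S \<iota> M1 a1 = {y \<in> Rat R S \<iota> M2 a2. g y = \<zero>\<^bsub>M3\<^esub>} \<and>
            g ` Rat R S \<iota> M2 a2 = Rat R S \<iota> M3 a3"
    if M1: "right_Cstar_module R S \<iota> M1 a1" and M2: "right_Cstar_module R S \<iota> M2 a2"
      and M3: "right_Cstar_module R S \<iota> M3 a3"
      and f: "Cstar_mod_hom R S \<iota> M1 a1 M2 a2 f" and g: "Cstar_mod_hom R S \<iota> M2 a2 M3 a3 g"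
      and inj: "inj_on f (carrier M1)"
      and ker: "f ` carrier M1 = {y \<in> carrier M2. g y = \<zero>\<^bsub>M3\<^esub>}"
      and surj: "g ` carrier M2 = carrier M3"
    for M1 :: "'a ring" and a1 and M2 :: "'b ring" and a2 and M3 :: "'c ring" and a3 and f g
  proof -
    interpret M1a: abelian_group M1 by (rule mod_facts(1)[OF M1])
    interpret M2a: abelian_group M2 by (rule mod_facts(1)[OF M2])
    have fc: "f \<in> carrier M1 \<rightarrow> carrier M2" and fadd: "\<forall>x\<in>carrier M1. \<forall>y\<in>carrier M1. f (x \<oplus>\<^bsub>M1\<^esub> y) = f x \<oplus>\<^bsub>M2\<^esub> f y"
      and fact: "\<And>x \<phi>. x \<in> carrier M1 \<Longrightarrow> \<phi> \<in> carrier C \<Longrightarrow> f (a1 x \<phi>) = a2 (f x) \<phi>"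
      using f unfolding Cstar_mod_hom_def by blast+
    have gact: "\<And>x \<phi>. x \<in> carrier M2 \<Longrightarrow> \<phi> \<in> carrier C \<Longrightarrow> g (a2 x \<phi>) = a3 (g x) \<phi>"
      using g unfolding Cstar_mod_hom_def by blast
    have A: "inj_on f (Rat R S \<iota> M1 a1)" using inj Rat_sub by (rule inj_on_subset)
    have B1: "f ` Rat R S \<iota> M1 a1 \<subseteq> {y \<in> Rat R S \<iota> M2 a2. g y = \<zero>\<^bsub>M3\<^esub>}"
    proof
      fix y assume "y \<in> f ` Rat R S \<iota> M1 a1"
      then obtain x where x: "x \<in> Rat R S \<iota> M1 a1" "y = f x" by (rule imageE)
      have "f x \<in> f ` carrier M1" using subsetD[OF Rat_sub x(1)] by (rule imageI)
      then have "f x \<in> {y \<in> carrier M2. g y = \<zero>\<^bsub>M3\<^esub>}" using ker by simp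
      then show "y \<in> {y \<in> Rat R S \<iota> M2 a2. g y = \<zero>\<^bsub>M3\<^esub>}"
        using hom_Rat[OF M1 M2 f x(1)] x(2) by simp
    qed
    have B2: "{y \<in> Rat R S \<iota> M2 a2. g y = \<zero>\<^bsub>M3\<^esub>} \<subseteq> f ` Rat R S \<iota> M1 a1"
    proof
      fix y assume y: "y \<in> {y \<in> Rat R S \<iota> M2 a2. g y = \<zero>\<^bsub>M3\<^esub>}"
      have yR: "y \<in> Rat R S \<iota> M2 a2" using y by simp
      have "y \<in> {y \<in> carrier M2. g y = \<zero>\<^bsub>M3\<^esub>}" using y subsetD[OF Rat_sub yR] by simp
      then have "y \<in> f ` carrier M1" using ker by simp
      then obtain m where m: "m \<in> carrier M1" "y = f m" by blast
      obtain bs where bsall: "basis_ok R S \<iota> bs \<and> (\<forall>\<phi>\<in>carrier C. a2 y \<phi> = a2 y (approx R S \<iota> bs \<phi>))"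
        using Rat_approx[OF M2 lp yR] by (elim exE)
      have bs: "basis_ok R S \<iota> bs" using bsall by (rule conjunct1)
      have yb: "\<forall>\<phi>\<in>carrier C. a2 y \<phi> = a2 y (approx R S \<iota> bs \<phi>)" using bsall by (rule conjunct2)
      have chi: "\<And>j. j < length bs \<Longrightarrow> chi S \<iota> (fst (bs!j)) \<in> carrier C" using chi_closed[OF bs] .
      have n: "\<And>j. j < length bs \<Longrightarrow> a1 m (chi S \<iota> (fst (bs!j))) \<in> carrier M1"
        using mod_facts(2)[OF M1 m(1)] chi by blast
      have r: "\<And>j \<phi>. j < length bs \<Longrightarrow> \<phi> \<in> carrier C \<Longrightarrow> rmult S (\<phi> (snd (bs!j))) \<in> carrier C"
        using basis_nth(1)[OF bs] by (auto intro!: rmult_closed)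
      have "m \<in> Rat R S \<iota> M1 a1"
      proof (rule RatI'[OF M1 m(1) bs n])
        fix \<phi> assume \<phi>: "\<phi> \<in> carrier C"
        let ?t = "\<lambda>j. a1 (a1 m (chi S \<iota> (fst (bs!j)))) (rmult S (\<phi> (snd (bs!j))))"
        have tc: "?t \<in> {..<length bs} \<rightarrow> carrier M1"
          using n r \<phi> mod_facts(2)[OF M1] by auto
        have "f (a1 m \<phi>) = a2 y (approx R S \<iota> bs \<phi>)" using fact[OF m(1) \<phi>] m(2) yb[rule_format, OF \<phi>] by simp
        also have "\<dots> = finsum M2 (\<lambda>j. a2 (a2 y (chi S \<iota> (fst (bs!j)))) (rmult S (\<phi> (snd (bs!j))))) {..<length bs}"
          by (rule act_approx[OF M2 subsetD[OF Rat_sub yR] bs \<phi>])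
        also have "\<dots> = finsum M2 (\<lambda>j. f (?t j)) {..<length bs}"
        proof (rule M2a.finsum_cong'[OF refl])
          show "(\<lambda>j. f (?t j)) \<in> {..<length bs} \<rightarrow> carrier M2" using tc fc by auto
          fix j assume "j \<in> {..<length bs}"
          then have j: "j < length bs" by simp
          show "a2 (a2 y (chi S \<iota> (fst (bs!j)))) (rmult S (\<phi> (snd (bs!j)))) = f (?t j)"
            using fact[OF n[OF j] r[OF j \<phi>]] fact[OF m(1) chi[OF j]] m(2) by simp
        qed
        also have "\<dots> = f (finsum M1 ?t {..<length bs})"
          by (rule add_hom_finsum[OF M1a.abelian_group_axioms M2a.abelian_group_axioms fc fadd, symmetric]) (use tc in auto)
        finally have "f (a1 m \<phi>) = f (finsum M1 ?t {..<length bs})" .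
        moreover have "a1 m \<phi> \<in> carrier M1" using mod_facts(2)[OF M1 m(1) \<phi>] .
        moreover have "finsum M1 ?t {..<length bs} \<in> carrier M1" using tc by (rule M1a.finsum_closed)
        ultimately show "a1 m \<phi> = finsum M1 ?t {..<length bs}" using inj by (meson inj_onD)
      qed
      then show "y \<in> f ` Rat R S \<iota> M1 a1" using m by blast
    qed
    have C1: "g ` Rat R S \<iota> M2 a2 \<subseteq> Rat R S \<iota> M3 a3" using hom_Rat[OF M2 M3 g] by blast
    have C2: "Rat R S \<iota> M3 a3 \<subseteq> g ` Rat R S \<iota> M2 a2"
    proof
      fix z assume z: "z \<in> Rat R S \<iota> M3 a3"
      have "z \<in> g ` carrier M2" using subsetD[OF Rat_sub z] surj by simp
      then obtain y where y: "y \<in> carrier M2" "z = g y" by blast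
      obtain bs where bsall: "basis_ok R S \<iota> bs \<and> (\<forall>\<phi>\<in>carrier C. a3 z \<phi> = a3 z (approx R S \<iota> bs \<phi>))"
        using Rat_approx[OF M3 lp z] by (elim exE)
      have bs: "basis_ok R S \<iota> bs" using bsall by (rule conjunct1)
      have zb: "\<forall>\<phi>\<in>carrier C. a3 z \<phi> = a3 z (approx R S \<iota> bs \<phi>)" using bsall by (rule conjunct2)
      have a: "approx R S \<iota> bs \<one>\<^bsub>C\<^esub> \<in> carrier C" by (rule approx_closed[OF bs C_one_closed])
      have "g (a2 y (approx R S \<iota> bs \<one>\<^bsub>C\<^esub>)) = a3 z (approx R S \<iota> bs \<one>\<^bsub>C\<^esub>)"
        using gact[OF y(1) a] y(2) by simp
      also have "\<dots> = a3 z \<one>\<^bsub>C\<^esub>" using zb[rule_format, OF C_one_closed] by (rule sym)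
      also have "\<dots> = z" by (rule mod_facts(5)[OF M3 subsetD[OF Rat_sub z]])
      finally show "z \<in> g ` Rat R S \<iota> M2 a2" using RatGen[OF M2 y(1) bs] by (metis imageI)
    qed
    show ?thesis using A B1 B2 C1 C2 by blast
  qed
  show ?thesis
    apply (rule conjI)
     apply (intro ballI allI impI)
     apply (erule conjE)
     apply (rule P1; assumption)
    apply (intro allI impI)
    apply (elim conjE)
    apply (rule P2; assumption)
    done
qed

end
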